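(* For every prime $p$, $\widetilde{\mathbb{Q}_p}=\mathbb{Q}_p^{\mathrm{alg}}$, where $\mathbb{Q}_p^{\mathrm{alg}}=\{x\in\mathbb{Q}_p: x\text{ is algebraic over }\mathbb{Q}\}$.
   Context: Let $K$ be a field. For $r\in K$, a finite set $A(r)$ with $\{r\}\subseteq A(r)\subseteq K$ is called adequate for $r$ if every mapping $f:A(r)\to K$ satisfying (1) if $1\in A(r)$ then $f(1)=1$; (2) if $a,b\in A(r)$ and $a+b\in A(r)$ then $f(a+b)=f(a)+f(b)$; (3) if $a,b\in A(r)$ and $a\cdot b\in A(r)$ then $f(a\cdot b)=f(a)\cdot f(b)$, also satisfies $f(r)=r$. $\widetilde{K}$ denotes the set of all $r\in K$ for which some finite set adequate for $r$ exists. $\mathbb{Q}_p$ is the field of $p$-adic numbers. *)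

theory Defs
  imports Complex_Main "HOL-Computational_Algebra.Computational_Algebra"
begin

definition adequate :: "'a::field set \<Rightarrow> 'a \<Rightarrow> bool" where
  "adequate A r \<longleftrightarrow> finite A \<and> r \<in> A \<and>
     (\<forall>f :: 'a \<Rightarrow> 'a.
        ((1 \<in> A \<longrightarrow> f 1 = 1) \<and>
         (\<forall>a\<in>A. \<forall>b\<in>A. a + b \<in> A \<longrightarrow> f (a + b) = f a + f b) \<and>
         (\<forall>a\<in>A. \<forall>b\<in>A. a * b \<in> A \<longrightarrow> f (a * b) = f a * f b))
        \<longrightarrow> f r = r)"

definition tilde :: "'a::field set" where
  "tilde = {r. \<exists>A. adequate A r}"

definition padic_abs_rat :: "nat \<Rightarrow> rat \<Rightarrow> real" where
  "padic_abs_rat p q =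
     (if q = 0 then 0
      else (let (a, b) = quotient_of q in
            real p powr (- (real (multiplicity (int p) a) - real (multiplicity (int p) b)))))"

text \<open>This characterizes Q_p up to a unique isomorphism of valued fields.\<close>

definition is_Qp :: "nat \<Rightarrow> ('a::field_char_0 \<Rightarrow> real) \<Rightarrow> bool" where
  "is_Qp p av \<longleftrightarrow>
     (\<forall>x. av x \<ge> 0) \<and> (\<forall>x. av x = 0 \<longleftrightarrow> x = 0) \<and>
     (\<forall>x y. av (x * y) = av x * av y) \<and>
     (\<forall>x y. av (x + y) \<le> max (av x) (av y)) \<and>
     (\<forall>q. av (of_rat q) = padic_abs_rat p q) \<and>
     (\<forall>X :: nat \<Rightarrow> 'a.
        (\<forall>e>0. \<exists>N. \<forall>m\<ge>N. \<forall>n\<ge>N. av (X m - X n) < e) \<longrightarrow>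
        (\<exists>L. \<forall>e>0. \<exists>N. \<forall>n\<ge>N. av (X n - L) < e)) \<and>
     (\<forall>x. \<forall>e>0. \<exists>q. av (x - of_rat q) < e)"

end

theory Submission
  imports Defs "HOL-Library.Function_Algebras"
begin

locale qp =
  fixes p :: nat and av :: "'a::field_char_0 \<Rightarrow> real"
  assumes prime_p: "prime p" and isqp: "is_Qp p av"
begin

lemma av_nonneg: "av x \<ge> 0" using isqp unfolding is_Qp_def by blast
lemma av_zero_iff: "av x = 0 \<longleftrightarrow> x = 0" using isqp unfolding is_Qp_def by blast
lemma av_mult: "av (x * y) = av x * av y" using isqp unfolding is_Qp_def by blast
lemma av_add: "av (x + y) \<le> max (av x) (av y)" using isqp unfolding is_Qp_def by blast
lemma av_rat: "av (of_rat q) = padic_abs_rat p q" using isqp unfolding is_Qp_def by blast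
lemma av_complete: "(\<forall>e>0. \<exists>N. \<forall>m\<ge>N. \<forall>n\<ge>N. av ((X :: nat \<Rightarrow> 'a) m - X n) < e) \<Longrightarrow>
        (\<exists>L. \<forall>e>0. \<exists>N. \<forall>n\<ge>N. av (X n - L) < e)"
proof -
  assume h: "\<forall>e>0. \<exists>N. \<forall>m\<ge>N. \<forall>n\<ge>N. av (X m - X n) < e"
  have "\<forall>X :: nat \<Rightarrow> 'a. (\<forall>e>0. \<exists>N. \<forall>m\<ge>N. \<forall>n\<ge>N. av (X m - X n) < e) \<longrightarrow>
        (\<exists>L. \<forall>e>0. \<exists>N. \<forall>n\<ge>N. av (X n - L) < e)" using isqp unfolding is_Qp_def by (elim conjE)
  then show ?thesis using h by blast
qed
lemma av_dense: "e > 0 \<Longrightarrow> \<exists>q. av (x - of_rat q) < e" using isqp unfolding is_Qp_def by blast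

lemma av_0[simp]: "av 0 = 0" using av_zero_iff by blast
lemma av_pos: "x \<noteq> 0 \<Longrightarrow> av x > 0" using av_zero_iff av_nonneg
  by (metis less_eq_real_def)
lemma av_1[simp]: "av 1 = 1"
proof -
  have "av 1 = av 1 * av 1" using av_mult[of 1 1] by simp
  moreover have "av 1 \<noteq> 0" using av_zero_iff by simp
  ultimately show ?thesis by (metis mult_cancel_left1)
qed
lemma av_minus1: "av (-1) = 1"
proof -
  have "av (-1) * av (-1) = 1" using av_mult[of "-1" "-1"] by simp
  then show ?thesis using av_nonneg[of "-1"]
    by (metis abs_of_nonneg mult_cancel_right2 real_sqrt_abs2 real_sqrt_one square_eq_1_iff mult_1)
qed
lemma av_uminus[simp]: "av (- x) = av x"
  using av_mult[of "-1" x] av_minus1 by simp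
lemma av_sub_sym: "av (x - y) = av (y - x)"
  by (metis av_uminus minus_diff_eq)
lemma av_diff: "av (x - y) \<le> max (av x) (av y)"
  using av_add[of x "-y"] by simp
lemma av_power: "av (x ^ n) = av x ^ n"
  by (induction n) (simp_all add: av_mult)
lemma av_divide: "av (x / y) = av x / av y"
proof (cases "y = 0")
  case True then show ?thesis by simp
next
  case False
  have "av (x / y) * av y = av x" using av_mult[of "x/y" y] False by simp
  then show ?thesis using av_pos[OF False] by (simp add: field_simps)
qed
lemma av_add_le: "av x \<le> B \<Longrightarrow> av y \<le> B \<Longrightarrow> av (x + y) \<le> B"
  using av_add[of x y] by simp
lemma av_add_less: "av x < B \<Longrightarrow> av y < B \<Longrightarrow> av (x + y) < B"
  using av_add[of x y] by simp
lemma av_eq_big: "av x < av y \<Longrightarrow> av (x + y) = av y"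
proof -
  assume a: "av x < av y"
  have 1: "av (x + y) \<le> av y" using av_add[of x y] a by simp
  have "av y \<le> max (av (x + y)) (av x)" using av_add[of "x + y" "-x"] by simp
  with a have "av y \<le> av (x + y)" by (simp add: max_def split: if_splits)
  with 1 show ?thesis by simp
qed
lemma av_trans: "av (x - y) \<le> max (av (x - z)) (av (z - y))"
  using av_add[of "x - z" "z - y"] by simp
lemma av_sum_le: "(\<And>i. i \<in> S \<Longrightarrow> av (f i) \<le> B) \<Longrightarrow> B \<ge> 0 \<Longrightarrow> av (sum f S) \<le> B"
proof (induction S rule: infinite_finite_induct)
  case (insert x F) then show ?case by (simp add: av_add_le)
qed auto

lemma p_gt1: "p > 1" using prime_p prime_gt_1_nat by blast

lemma av_of_int: "av (of_int n) = real p powr (- real (multiplicity (int p) n))"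
  if "n \<noteq> 0"
proof -
  have "av (of_int n) = av (of_rat (of_int n))" by simp
  also have "\<dots> = padic_abs_rat p (of_int n)" by (rule av_rat)
  also have "\<dots> = real p powr (- real (multiplicity (int p) n))"
    using that by (simp add: padic_abs_rat_def quotient_of_int)
  finally show ?thesis .
qed

lemma av_of_int_le1: "av (of_int n) \<le> 1"
proof (cases "n = 0")
  case False
  have "real p powr (- real (multiplicity (int p) n)) \<le> real p powr 0"
    using p_gt1 by (intro powr_mono) auto
  then show ?thesis using av_of_int[OF False] p_gt1 by simp
qed simp

lemma av_p: "av (of_nat p) = 1 / real p"
proof -
  have "av (of_nat p) = av (of_int (int p))" by simp
  also have "\<dots> = real p powr (- real (multiplicity (int p) (int p)))"
    using p_gt1 by (intro av_of_int) simp
  also have "multiplicity (int p) (int p) = 1"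
    using prime_p by (intro multiplicity_self) (auto simp: prime_int_iff prime_gt_1_nat)
  finally show ?thesis using p_gt1 by (simp add: powr_minus_divide)
qed

lemma av_ppow: "av (of_nat p ^ k) = (1 / real p) ^ k"
  by (simp add: av_power av_p)

lemma av_discrete: "x \<noteq> 0 \<Longrightarrow> \<exists>j::int. av x = real p powr j"
proof -
  assume x: "x \<noteq> 0"
  obtain q where q: "av (x - of_rat q) < av x" using av_dense av_pos[OF x] by blast
  have eq: "av (of_rat q) = av x"
  proof -
    have "av (of_rat q) = av (x + (- (x - of_rat q)))" by simp
    also have "\<dots> = av x" by (subst add.commute, rule av_eq_big) (use q av_sub_sym in simp)
    finally show ?thesis .
  qed
  have "q \<noteq> 0" using eq av_pos[OF x] by auto
  obtain a b where ab: "quotient_of q = (a, b)" by (cases "quotient_of q")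
  have "av x = real p powr (- (real (multiplicity (int p) a) - real (multiplicity (int p) b)))"
    using eq av_rat[of q] \<open>q \<noteq> 0\<close> ab by (simp add: padic_abs_rat_def)
  then show ?thesis
    by (metis of_int_diff of_int_minus of_int_of_nat_eq)
qed

end

context qp
begin

lemma av_powdiff:
  assumes "av t \<le> \<rho>" "av u \<le> \<rho>" "\<rho> \<le> 1" "j \<ge> 1"
  shows "av (t ^ j - u ^ j) \<le> av (t - u) * \<rho> ^ (j - 1)"
  using assms(4)
proof (induction j rule: dec_induct)
  case base then show ?case by simp
next
  case (step j)
  have eq: "t ^ Suc j - u ^ Suc j = t * (t ^ j - u ^ j) + (t - u) * u ^ j"
    by (simp add: algebra_simps)
  have r0: "\<rho> \<ge> 0" using assms(1) av_nonneg order_trans by blast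
  have 1: "av (t * (t ^ j - u ^ j)) \<le> av (t - u) * \<rho> ^ j"
  proof -
    have "av (t * (t ^ j - u ^ j)) = av t * av (t ^ j - u ^ j)" by (rule av_mult)
    also have "\<dots> \<le> \<rho> * (av (t - u) * \<rho> ^ (j - 1))"
      using step.IH assms(1) av_nonneg r0 by (intro mult_mono) auto
    also have "\<dots> = av (t - u) * \<rho> ^ j" using step.hyps
      by (cases j) (simp_all add: algebra_simps)
    finally show ?thesis .
  qed
  have 2: "av ((t - u) * u ^ j) \<le> av (t - u) * \<rho> ^ j"
    unfolding av_mult av_power
    using assms(2) av_nonneg by (intro mult_left_mono power_mono) auto
  show ?case unfolding eq using av_add_le[OF 1 2] by simp
qed

lemma av_poly_rdiff:
  fixes r :: "'a poly"
  assumes "coeff r 0 = 0" "coeff r 1 = 0" "\<And>j. av (coeff r j) \<le> M" "M \<ge> 0"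
    "av t \<le> \<rho>" "av u \<le> \<rho>" "\<rho> \<le> 1"
  shows "av (poly r t - poly r u) \<le> av (t - u) * \<rho> * M"
proof -
  have r0: "\<rho> \<ge> 0" using assms(5) av_nonneg order_trans by blast
  have "poly r t - poly r u = (\<Sum>i\<le>degree r. coeff r i * (t ^ i - u ^ i))"
    unfolding poly_altdef[of r t] poly_altdef[of r u] sum_subtractf[symmetric] right_diff_distrib ..
  also have "av \<dots> \<le> av (t - u) * \<rho> * M"
  proof (rule av_sum_le)
    fix i assume "i \<in> {..degree r}"
    show "av (coeff r i * (t ^ i - u ^ i)) \<le> av (t - u) * \<rho> * M"
    proof (cases "i \<le> 1")
      case True
      then have "coeff r i = 0" using assms(1,2) by (cases i) auto
      then show ?thesis using r0 assms(4) av_nonneg by simp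
    next
      case False
      have "av (t ^ i - u ^ i) \<le> av (t - u) * \<rho> ^ (i - 1)"
        using False assms by (intro av_powdiff) auto
      also have "\<dots> \<le> av (t - u) * \<rho>"
      proof -
        have "\<rho> ^ (i - 1) \<le> \<rho> ^ 1" using False r0 assms(7) by (intro power_decreasing) auto
        then show ?thesis using av_nonneg by (intro mult_left_mono) auto
      qed
      finally have "av (t ^ i - u ^ i) \<le> av (t - u) * \<rho>" .
      then have "av (coeff r i) * av (t ^ i - u ^ i) \<le> M * (av (t - u) * \<rho>)"
        using assms(3)[of i] av_nonneg assms(4) by (intro mult_mono) auto
      then show ?thesis unfolding av_mult by (simp add: algebra_simps)
    qed
  next
    show "av (t - u) * \<rho> * M \<ge> 0" using r0 assms(4) av_nonneg by simp
  qed
  finally show ?thesis .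
qed

lemma hensel_core:
  fixes q :: "'a poly"
  assumes c: "coeff q 1 \<noteq> 0"
    and rho: "0 < \<rho>" "\<rho> \<le> 1" and M: "M \<ge> 0" "\<And>j. j \<ge> 2 \<Longrightarrow> av (coeff q j) \<le> M"
    and MC: "M * \<rho> < av (coeff q 1)" and q0: "av (coeff q 0) \<le> \<rho> * av (coeff q 1)"
  shows "\<exists>t. av t \<le> \<rho> \<and> poly q t = 0"
proof -
  define c0 where "c0 = coeff q 0"
  define c1 where "c1 = coeff q 1"
  define C where "C = av c1"
  have c1nz: "c1 \<noteq> 0" using c by (simp add: c1_def)
  have Cpos: "C > 0" using c av_pos unfolding C_def c1_def by blast
  define r where "r = q - [:c0, c1:]"
  have r0: "coeff r 0 = 0" and r1: "coeff r 1 = 0" by (simp_all add: r_def c0_def c1_def)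
  have rM: "av (coeff r j) \<le> M" for j
  proof (cases "j \<le> 1")
    case True then show ?thesis using r0 r1 M(1) by (cases j) auto
  next
    case False
    then have "coeff r j = coeff q j" by (simp add: r_def coeff_pCons split: nat.split)
    then show ?thesis using M(2)[of j] False by simp
  qed
  have polyq: "poly q t = c0 + c1 * t + poly r t" for t by (simp add: r_def algebra_simps)
  define T where "T t = t - poly q t / c1" for t
  have T_alt: "T t = - (c0 + poly r t) / c1" for t
    using c unfolding T_def polyq c1_def by (simp add: field_simps)
  define \<theta> where "\<theta> = \<rho> * M / C"
  have th0: "\<theta> \<ge> 0" using rho M Cpos by (simp add: \<theta>_def)
  have th1: "\<theta> < 1" using MC Cpos by (simp add: \<theta>_def C_def c1_def mult.commute)
  have rdiff: "av (poly r t - poly r u) \<le> av (t - u) * \<rho> * M" if "av t \<le> \<rho>" "av u \<le> \<rho>" for t u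
    by (rule av_poly_rdiff[OF r0 r1 rM M(1) that rho(2)])
  have Tball: "av (T t) \<le> \<rho>" if "av t \<le> \<rho>" for t
  proof -
    have "av (poly r t) \<le> \<rho> * \<rho> * M"
    proof -
      have "av (poly r t - poly r 0) \<le> av (t - 0) * \<rho> * M"
        using rdiff[of t 0] that rho by simp
      also have "\<dots> \<le> \<rho> * \<rho> * M" using that M(1) rho
        by (intro mult_right_mono) auto
      finally show ?thesis using r0 by (simp add: poly_0_coeff_0)
    qed
    also have "\<dots> = \<rho> * (M * \<rho>)" by (simp add: algebra_simps)
    also have "\<dots> \<le> \<rho> * C" using MC rho unfolding C_def c1_def
      by (intro mult_left_mono) auto
    finally have 1: "av (poly r t) \<le> \<rho> * C" .
    have "av (T t) = av (- (c0 + poly r t)) / C" by (simp only: T_alt C_def av_divide)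
    then have "av (T t) = av (c0 + poly r t) / C" by (simp only: av_uminus)
    also have "\<dots> \<le> (\<rho> * C) / C"
      using av_add_le[OF q0[folded c0_def c1_def C_def] 1] Cpos by (intro divide_right_mono) auto
    finally show ?thesis using Cpos by simp
  qed
  have Tcontr: "av (T t - T u) \<le> \<theta> * av (t - u)" if "av t \<le> \<rho>" "av u \<le> \<rho>" for t u
  proof -
    have "T t - T u = - (poly r t - poly r u) / c1" unfolding T_alt using c1nz by (simp add: field_simps)
    then have "av (T t - T u) = av (poly r t - poly r u) / C" by (simp add: av_divide C_def av_sub_sym)
    also have "\<dots> \<le> (av (t - u) * \<rho> * M) / C" using rdiff[OF that] Cpos by (intro divide_right_mono) auto
    also have "\<dots> = \<theta> * av (t - u)" by (simp add: \<theta>_def)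
    finally show ?thesis .
  qed
  define s where "s n = (T ^^ n) 0" for n
  have sSuc: "s (Suc n) = T (s n)" for n by (simp add: s_def)
  have s0: "s 0 = 0" by (simp add: s_def)
  have sball: "av (s n) \<le> \<rho>" for n
  proof (induction n)
    case 0 show ?case using rho by (simp add: s0)
  next
    case (Suc n) show ?case unfolding sSuc by (rule Tball[OF Suc.IH])
  qed
  have sstep: "av (s (Suc n) - s n) \<le> \<theta> ^ n * \<rho>" for n
  proof (induction n)
    case 0
    have "av (s (Suc 0) - s 0) = av (T 0)" by (simp only: sSuc s0 diff_zero)
    then show ?case using Tball[of 0] rho by simp
  next
    case (Suc n)
    have "av (s (Suc (Suc n)) - s (Suc n)) \<le> \<theta> * av (s (Suc n) - s n)"
      using Tcontr[OF sball[of "Suc n"] sball[of n]] by (simp only: sSuc)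
    also have "\<dots> \<le> \<theta> * (\<theta> ^ n * \<rho>)" using Suc th0 by (intro mult_left_mono) auto
    finally show ?case by simp
  qed
  have sfar: "av (s (n + j) - s n) \<le> \<theta> ^ n * \<rho>" for n j
  proof (induction j)
    case 0 then show ?case using rho th0 by simp
  next
    case (Suc j)
    have X: "av (s (Suc (n + j)) - s (n + j)) \<le> \<theta> ^ n * \<rho>"
    proof -
      have "\<theta> ^ (n + j) \<le> \<theta> ^ n" using th0 th1 by (intro power_decreasing) auto
      then have "\<theta> ^ (n + j) * \<rho> \<le> \<theta> ^ n * \<rho>" using rho by (intro mult_right_mono) auto
      then show ?thesis using sstep[of "n + j"] by linarith
    qed
    have "av ((s (Suc (n + j)) - s (n + j)) + (s (n + j) - s n)) \<le> \<theta> ^ n * \<rho>"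
      by (rule av_add_le[OF X Suc.IH])
    then show ?case by simp
  qed
  have cauchy: "\<forall>e>0. \<exists>N. \<forall>m\<ge>N. \<forall>n\<ge>N. av (s m - s n) < e"
  proof (intro allI impI)
    fix e :: real assume e: "e > 0"
    obtain N where N: "\<theta> ^ N < e / \<rho>" using real_arch_pow_inv[of "e / \<rho>" \<theta>] e rho th1 by auto
    have "\<theta> ^ N * \<rho> < e" using N rho by (simp add: field_simps)
    have bnd: "av (s m - s n) < e" if "m \<ge> N" "n \<ge> N" "m \<ge> n" for m n
    proof -
      have "av (s (n + (m - n)) - s n) \<le> \<theta> ^ n * \<rho>" by (rule sfar)
      moreover have "\<theta> ^ n \<le> \<theta> ^ N" using that th0 th1 by (intro power_decreasing) auto
      moreover have "\<theta> ^ n * \<rho> \<le> \<theta> ^ N * \<rho>" using calculation(2) rho by (intro mult_right_mono) auto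
      moreover have "n + (m - n) = m" using that by simp
      ultimately show ?thesis using \<open>\<theta> ^ N * \<rho> < e\<close> by auto
    qed
    show "\<exists>N. \<forall>m\<ge>N. \<forall>n\<ge>N. av (s m - s n) < e"
    proof (intro exI allI impI)
      fix m n assume "m \<ge> N" "n \<ge> N"
      then show "av (s m - s n) < e"
        using bnd[of m n] bnd[of n m] av_sub_sym[of "s m" "s n"] by (cases "m \<ge> n") auto
    qed
  qed
  obtain L where L: "\<forall>e>0. \<exists>N. \<forall>n\<ge>N. av (s n - L) < e" using av_complete[OF cauchy] by blast
  have Lball: "av L \<le> \<rho>"
  proof -
    obtain N where "\<forall>n\<ge>N. av (s n - L) < \<rho>" using L rho by blast
    then have "av (s N - L) < \<rho>" by simp
    then show ?thesis using av_trans[of L 0 "s N"] sball[of N] av_sub_sym[of L "s N"] by simp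
  qed
  have Tfix: "T L = L"
  proof (rule ccontr)
    assume ne: "T L \<noteq> L"
    define e where "e = av (T L - L)"
    have e: "e > 0" using ne av_pos unfolding e_def by simp
    obtain N where N: "\<forall>n\<ge>N. av (s n - L) < e" using L e by blast
    have 1: "av (T L - T (s N)) < e"
    proof -
      have "av (T L - T (s N)) \<le> \<theta> * av (L - s N)" by (rule Tcontr[OF Lball sball])
      also have "\<dots> \<le> 1 * av (L - s N)" using th1 av_nonneg[of "L - s N"] by (intro mult_right_mono) auto
      also have "\<dots> < e" using N av_sub_sym by auto
      finally show ?thesis .
    qed
    have 2: "av (s (Suc N) - L) < e" using N by simp
    have "T L - L = (T L - T (s N)) + (s (Suc N) - L)" by (simp add: sSuc)
    then have "av (T L - L) < e" using av_add_less[OF 1 2] by simp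
    then show False unfolding e_def by simp
  qed
  then have "poly q L / c1 = 0" unfolding T_def by simp
  then have "poly q L = 0" using c by (simp add: c1_def)
  then show ?thesis using Lball by blast
qed

end

context qp
begin

lemma coeff_pcomp_bound:
  fixes P :: "'a poly"
  assumes "\<And>j. av (coeff P j) \<le> B" "B \<ge> 0"
  shows "av (coeff (pcompose P [:y, 1:]) j) \<le> B * (max 1 (av y)) ^ degree P"
  using assms(1)
proof (induction P arbitrary: j rule: pCons_induct)
  case 0 then show ?case using assms(2) by simp
next
  case (pCons a P)
  define m where "m = max 1 (av y)"
  have m1: "m \<ge> 1" by (simp add: m_def)
  have aB: "av a \<le> B" using pCons.prems[of 0] by simp
  show ?case
  proof (cases "P = 0")
    case True
    then show ?thesis using aB assms(2) by (auto simp: pcompose_pCons coeff_pCons split: nat.split)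
  next
    case False
    define S where "S = pcompose P [:y, 1:]"
    have IH: "av (coeff S i) \<le> B * m ^ degree P" for i
      unfolding S_def m_def using pCons.prems by (intro pCons.IH) (metis coeff_pCons_Suc)
    have Bm: "B * m ^ degree P \<le> B * m ^ Suc (degree P)"
      using m1 assms(2) by (intro mult_left_mono power_increasing) auto
    have B1: "B \<le> B * m ^ Suc (degree P)"
      using m1 assms(2) by (metis mult_left_mono mult.right_neutral one_le_power)
    have eq: "pcompose (pCons a P) [:y, 1:] = [:a:] + (smult y S + pCons 0 S)"
      by (simp add: pcompose_pCons S_def)
    have deg: "degree (pCons a P) = Suc (degree P)" using False by simp
    have t1: "av (coeff [:a:] j) \<le> B * m ^ Suc (degree P)"
      using aB B1 assms(2) by (cases j) auto
    have t2: "av (coeff (smult y S) j) \<le> B * m ^ Suc (degree P)"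
    proof -
      have "av (coeff (smult y S) j) = av y * av (coeff S j)" by (simp add: av_mult)
      also have "\<dots> \<le> m * (B * m ^ degree P)"
        using IH[of j] av_nonneg by (intro mult_mono) (auto simp: m_def)
      finally show ?thesis by (simp add: algebra_simps)
    qed
    have t3: "av (coeff (pCons 0 S) j) \<le> B * m ^ Suc (degree P)"
      using IH Bm assms(2) m1 by (cases j) (auto intro: order_trans)
    show ?thesis unfolding eq deg m_def[symmetric] coeff_add
      by (intro av_add_le t1 t2 t3)
  qed
qed

lemma hensel_perturb:
  fixes h :: "'a poly"
  assumes root: "poly h y = 0" and simple: "poly (pderiv h) y \<noteq> 0" and eps: "\<epsilon> > 0"
  shows "\<exists>\<delta>>0. \<forall>g. degree g \<le> degree h \<longrightarrow> (\<forall>j\<le>degree h. av (coeff g j - coeff h j) < \<delta>) \<longrightarrow>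
           (\<exists>y'. poly g y' = 0 \<and> av (y' - y) < \<epsilon>)"
proof -
  define Q where "Q = [:y, 1::'a:]"
  define qh where "qh = pcompose h Q"
  define c where "c = poly (pderiv h) y"
  define C where "C = av c"
  have Cpos: "C > 0" using simple av_pos by (simp add: C_def c_def)
  have qh0: "coeff qh 0 = 0" using root by (simp add: qh_def Q_def poly_0_coeff_0[symmetric] poly_pcompose)
  have qh1: "coeff qh 1 = c"
  proof -
    have "coeff qh 1 = coeff (pderiv qh) 0" by (simp add: coeff_pderiv)
    also have "\<dots> = poly (pderiv qh) 0" by (simp add: poly_0_coeff_0)
    also have "\<dots> = c" by (simp add: qh_def pderiv_pcompose poly_pcompose Q_def c_def pderiv_pCons)
    finally show ?thesis .
  qed
  define d where "d = degree h"
  define m where "m = max 1 (av y)"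
  have m1: "m \<ge> 1" by (simp add: m_def)
  have md: "m ^ d \<ge> 1" using m1 by simp
  define Bh where "Bh = (\<Sum>j\<le>d. av (coeff h j))"
  have Bh: "av (coeff h j) \<le> Bh" for j
  proof (cases "j \<le> d")
    case True
    then show ?thesis unfolding Bh_def
      by (intro member_le_sum) (auto simp: av_nonneg)
  next
    case False
    then have "coeff h j = 0" by (simp add: d_def coeff_eq_0)
    then show ?thesis unfolding Bh_def by (simp add: av_nonneg sum_nonneg)
  qed
  have Bh0: "Bh \<ge> 0" unfolding Bh_def by (simp add: av_nonneg sum_nonneg)
  have qhB: "av (coeff qh j) \<le> Bh * m ^ d" for j
    unfolding qh_def Q_def m_def d_def by (rule coeff_pcomp_bound[OF Bh Bh0])
  define Mq where "Mq = Bh * m ^ d + C"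
  have Mq: "Mq > 0" using Bh0 md Cpos by (simp add: Mq_def add_nonneg_pos)
  define \<rho> where "\<rho> = min (min 1 (\<epsilon> / 2)) (C / (2 * Mq))"
  have rho0: "\<rho> > 0" using eps Cpos Mq by (simp add: \<rho>_def)
  have rho1: "\<rho> \<le> 1" by (simp add: \<rho>_def)
  have rhoe: "\<rho> < \<epsilon>" using eps by (simp add: \<rho>_def)
  have rhoM: "Mq * \<rho> < C"
  proof -
    have "Mq * \<rho> \<le> Mq * (C / (2 * Mq))" using Mq by (intro mult_left_mono) (auto simp: \<rho>_def)
    also have "\<dots> = C / 2" using Mq by simp
    finally show ?thesis using Cpos by simp
  qed
  define \<delta> where "\<delta> = min C (\<rho> * C) / m ^ d"
  have delta0: "\<delta> > 0" using Cpos rho0 md by (simp add: \<delta>_def)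
  show ?thesis
  proof (intro exI[of _ \<delta>] conjI allI impI delta0)
    fix g :: "'a poly"
    assume degg: "degree g \<le> degree h" and close: "\<forall>j\<le>degree h. av (coeff g j - coeff h j) < \<delta>"
    define D where "D = g - h"
    have degD: "degree D \<le> d" unfolding D_def d_def using degg
      by (meson degree_diff_le le_refl)
    define B0 where "B0 = Max ((\<lambda>j. av (coeff D j)) ` {..d})"
    have B0: "av (coeff D j) \<le> B0" for j
    proof (cases "j \<le> d")
      case True then show ?thesis unfolding B0_def by (intro Max_ge) auto
    next
      case False
      then have "coeff D j = 0" using degD by (simp add: coeff_eq_0)
      moreover have "av (coeff D 0) \<le> B0" unfolding B0_def by (intro Max_ge) auto
      ultimately show ?thesis using av_nonneg[of "coeff D 0"] by simp
    qed
    have B0pos: "B0 \<ge> 0" using B0[of 0] av_nonneg order_trans by blast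
    have B0d: "B0 < \<delta>" unfolding B0_def using close
      by (subst Max_less_iff) (auto simp: D_def d_def)
    have diffB: "av (coeff (pcompose D Q) j) < min C (\<rho> * C)" for j
    proof -
      have "av (coeff (pcompose D Q) j) \<le> B0 * m ^ degree D"
        unfolding Q_def m_def by (rule coeff_pcomp_bound[OF B0 B0pos])
      also have "\<dots> \<le> B0 * m ^ d" using degD m1 B0pos by (intro mult_left_mono power_increasing) auto
      also have "\<dots> < \<delta> * m ^ d" using B0d md by simp
      also have "\<dots> = min C (\<rho> * C)" using md m1 by (simp add: \<delta>_def)
      finally show ?thesis .
    qed
    define qg where "qg = pcompose g Q"
    have qgeq: "qg = qh + pcompose D Q" by (simp add: qg_def qh_def D_def pcompose_diff)
    have qg1: "av (coeff qg 1) = C"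
    proof -
      have "av (coeff (pcompose D Q) 1) < av c" using diffB[of 1] by (simp add: C_def)
      then have "av (coeff (pcompose D Q) 1 + c) = av c" by (rule av_eq_big)
      moreover have "coeff qg 1 = coeff (pcompose D Q) 1 + c" by (simp only: qgeq coeff_add qh1 add.commute)
      ultimately show ?thesis by (simp add: C_def)
    qed
    have qg1nz: "coeff qg 1 \<noteq> 0" using qg1 Cpos by auto
    have qg0: "av (coeff qg 0) \<le> \<rho> * av (coeff qg 1)"
    proof -
      have "coeff qg 0 = coeff (pcompose D Q) 0" by (simp only: qgeq coeff_add qh0 add_0)
      then show ?thesis using diffB[of 0] qg1 by simp
    qed
    have qgj: "av (coeff qg j) \<le> Mq" for j
    proof -
      have "av (coeff qg j) \<le> max (av (coeff qh j)) (av (coeff (pcompose D Q) j))"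
        unfolding qgeq coeff_add by (rule av_add)
      moreover have "av (coeff qh j) \<le> Mq" using qhB[of j] Cpos by (simp add: Mq_def)
      moreover have "av (coeff (pcompose D Q) j) \<le> Mq" using diffB[of j] Bh0 md
        by (simp add: Mq_def) (smt (verit) mult_nonneg_nonneg zero_le_power)
      ultimately show ?thesis by simp
    qed
    obtain t where t: "av t \<le> \<rho>" "poly qg t = 0"
      using hensel_core[of qg \<rho> Mq] qg1nz rho0 rho1 Mq qgj qg1 rhoM qg0 by force
    have "poly g (y + t) = 0" using t(2) by (simp add: qg_def poly_pcompose Q_def add.commute)
    moreover have "av ((y + t) - y) < \<epsilon>" using t(1) rhoe by simp
    ultimately show "\<exists>y'. poly g y' = 0 \<and> av (y' - y) < \<epsilon>" by blast
  qed
qed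

end

definition resp :: "'a::field set \<Rightarrow> ('a \<Rightarrow> 'a) \<Rightarrow> bool" where
  "resp A f \<longleftrightarrow> (1 \<in> A \<longrightarrow> f 1 = 1) \<and>
         (\<forall>a\<in>A. \<forall>b\<in>A. a + b \<in> A \<longrightarrow> f (a + b) = f a + f b) \<and>
         (\<forall>a\<in>A. \<forall>b\<in>A. a * b \<in> A \<longrightarrow> f (a * b) = f a * f b)"

lemma adequate_resp: "adequate A r \<longleftrightarrow> finite A \<and> r \<in> A \<and> (\<forall>f. resp A f \<longrightarrow> f r = r)"
  unfolding adequate_def resp_def by blast

lemma resp_add: "resp A f \<Longrightarrow> a \<in> A \<Longrightarrow> b \<in> A \<Longrightarrow> a + b \<in> A \<Longrightarrow> f (a + b) = f a + f b"
  unfolding resp_def by blast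
lemma resp_mult: "resp A f \<Longrightarrow> a \<in> A \<Longrightarrow> b \<in> A \<Longrightarrow> a * b \<in> A \<Longrightarrow> f (a * b) = f a * f b"
  unfolding resp_def by blast
lemma resp_1: "resp A f \<Longrightarrow> 1 \<in> A \<Longrightarrow> f 1 = 1"
  unfolding resp_def by blast
lemma resp_0: "resp A f \<Longrightarrow> 0 \<in> A \<Longrightarrow> f 0 = 0"
  using resp_add[of A f 0 0] by (metis add_0 add_cancel_right_right)

lemma resp_int:
  fixes f :: "'a::field_char_0 \<Rightarrow> 'a"
  assumes f: "resp A f" and A: "of_int ` {-M..M} \<subseteq> A" and j: "\<bar>j\<bar> \<le> M"
  shows "f (of_int j) = of_int j"
proof -
  have "(0::int) \<in> {-M..M}" using j by simp
  then have "(of_int 0::'a) \<in> A" using A by blast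
  then have z: "f 0 = 0" using resp_0[OF f] by simp
  have nat: "f (of_nat n) = of_nat n" if "int n \<le> M" for n
    using that
  proof (induction n)
    case 0 then show ?case using z by simp
  next
    case (Suc n)
    have in1: "(1::'a) \<in> A" using A Suc.prems by (force intro: image_eqI[of _ _ 1])
    have inn: "(of_nat n::'a) \<in> A" using A Suc.prems by (force intro: image_eqI[of _ _ "int n"])
    have inSn: "(of_nat n + 1::'a) \<in> A" using A Suc.prems
      by (force intro: image_eqI[of _ _ "int n + 1"])
    have "f (of_nat (Suc n)) = f (of_nat n + 1)" by (simp add: add.commute)
    also have "\<dots> = f (of_nat n) + f 1" by (rule resp_add[OF f inn in1 inSn])
    also have "\<dots> = of_nat (Suc n)" using Suc resp_1[OF f in1] by simp
    finally show ?case .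
  qed
  show ?thesis
  proof (cases "j \<ge> 0")
    case True
    then obtain n where "j = int n" by (metis nonneg_eq_int)
    then show ?thesis using nat[of n] j by simp
  next
    case False
    then obtain n where n: "j = - int n" by (metis minus_minus neg_0_le_iff_le nonneg_eq_int linear)
    have in1: "(of_int j::'a) \<in> A" using A j by force
    have in2: "(of_nat n::'a) \<in> A" using A j n by (force intro: image_eqI[of _ _ "int n"])
    have in0: "(of_int j + of_nat n::'a) \<in> A" using A j n by (force intro: image_eqI[of _ _ 0])
    have jn: "(of_int j + of_nat n :: 'a) = 0" using n by simp
    have "0 = f (of_int j + of_nat n)" using z by (simp only: jn)
    also have "\<dots> = f (of_int j) + of_nat n" using resp_add[OF f in1 in2 in0] nat[of n] j n by simp
    finally have "f (of_int j) = - of_nat n" by (simp add: eq_neg_iff_add_eq_0)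
    then show ?thesis using n by simp
  qed
qed

fun hs :: "'a::comm_ring_1 list \<Rightarrow> 'a \<Rightarrow> 'a set" where
  "hs [] x = {0}"
| "hs (c # cs) x = {c, x * poly (Poly cs) x, c + x * poly (Poly cs) x} \<union> hs cs x"

lemma hs_finite: "finite (hs cs x)"
  by (induction cs) auto

lemma hs_poly: "poly (Poly cs) x \<in> hs cs x"
  by (cases cs) auto

lemma hs_0: "0 \<in> hs cs x"
  by (induction cs) auto

lemma resp_horner:
  assumes f: "resp A f" and x: "x \<in> A" and hs: "hs cs x \<subseteq> A" and fixc: "\<forall>c\<in>set cs. f c = c"
  shows "f (poly (Poly cs) x) = poly (Poly cs) (f x)"
  using hs fixc
proof (induction cs)
  case Nil
  then show ?case using resp_0[OF f] by auto
next
  case (Cons c cs)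
  define P where "P = poly (Poly cs) x"
  have PA: "P \<in> A" using Cons.prems(1) hs_poly[of cs x] unfolding P_def by auto
  have cA: "c \<in> A" "x * P \<in> A" "c + x * P \<in> A" using Cons.prems(1) unfolding P_def by auto
  have IH: "f P = poly (Poly cs) (f x)" unfolding P_def using Cons by auto
  have "f (poly (Poly (c # cs)) x) = f (c + x * P)" by (simp add: P_def)
  also have "\<dots> = f c + f (x * P)" by (rule resp_add[OF f cA])
  also have "\<dots> = c + f x * f P" using resp_mult[OF f x PA cA(2)] Cons.prems(2) by simp
  finally show ?case using IH by simp
qed

context qp
begin

lemma zp_test:
  assumes eq: "y * y = y + of_nat p * (z * z)"
  shows "av z \<le> 1"
proof (rule ccontr)
  assume "\<not> av z \<le> 1"
  then have z1: "av z > 1" by simp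
  then have znz: "z \<noteq> 0" by auto
  obtain j :: int where j: "av z = real p powr j" using av_discrete[OF znz] by blast
  have p1: "real p > 1" using p_gt1 by simp
  have "j > 0"
  proof (rule ccontr)
    assume "\<not> j > 0"
    then have "real p powr j \<le> real p powr 0" using p1 by (intro powr_mono) auto
    then show False using z1 j p1 by simp
  qed
  then have "real p powr j \<ge> real p powr 1" using p1 by (intro powr_mono) auto
  then have zp: "av z \<ge> p" using j p1 by simp
  have eq2: "y * y - y = of_nat p * (z * z)" using eq by simp
  have avR: "av (of_nat p * (z * z)) = av z * av z / p" using av_p by (simp add: av_mult)
  have R1: "av z * av z / p > 1"
  proof -
    have "av z * av z \<ge> real p * real p" using zp p1 by (intro mult_mono) auto
    then have "av z * av z / p \<ge> p" using p1 by (simp add: field_simps)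
    then show ?thesis using p1 by linarith
  qed
  show False
  proof (cases "av y \<le> 1")
    case True
    have "av (y * y - y) \<le> max (av (y * y)) (av y)" by (rule av_diff)
    moreover have "av (y * y) \<le> 1" using True av_nonneg[of y] by (simp add: av_mult mult_le_one)
    ultimately have "av (y * y - y) \<le> 1" using True by simp
    then show False using eq2 avR R1 by simp
  next
    case False
    then have ynz: "y \<noteq> 0" by auto
    have "av (- y) < av (y * y)" using False by (simp add: av_mult)
    then have "av (- y + y * y) = av (y * y)" by (rule av_eq_big)
    then have "av y * av y = av z * av z / p" using eq2 avR by (simp add: av_mult)
    moreover obtain i :: int where i: "av y = real p powr i" using av_discrete[OF ynz] by blast
    ultimately have "real p powr i * real p powr i = real p powr j * real p powr j / real p"
      using j by simp
    moreover have "real p powr (real_of_int (i + i)) = real p powr i * real p powr i"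
      by (simp only: of_int_add powr_add)
    moreover have "real p powr (real_of_int (j + j - 1)) = real p powr j * real p powr j / real p"
    proof -
      have "real p powr (real_of_int (j + j - 1)) = real p powr (real_of_int j + real_of_int j - 1)" by simp
      also have "\<dots> = real p powr (real_of_int j + real_of_int j) / real p powr 1" by (rule powr_diff)
      also have "\<dots> = real p powr j * real p powr j / real p" using p1 by (simp only: powr_add powr_one)
      finally show ?thesis .
    qed
    ultimately have "real p powr (real_of_int (i + i)) = real p powr (real_of_int (j + j - 1))"
      by simp
    then have "real_of_int (i + i) = real_of_int (j + j - 1)" using p1 powr_inj[of "real p" "real_of_int (i + i)" "real_of_int (j + j - 1)"] by linarith
    then have "i + i = j + j - 1" by linarith
    then show False by presburger
  qed
qed

lemma solve_quad:
  assumes "av w \<le> 1 / real p"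
  shows "\<exists>y. y * y = y + w"
proof -
  define q where "q = [:-w, -1, 1:]"
  have p1: "real p > 1" using p_gt1 by simp
  have "\<exists>t. av t \<le> 1 / real p \<and> poly q t = 0"
  proof (rule hensel_core[of q "1 / real p" 1])
    show "coeff q 1 \<noteq> 0" by (simp add: q_def)
    show "0 < 1 / real p" using p1 by simp
    show "1 / real p \<le> 1" using p1 by simp
    show "(0::real) \<le> 1" by simp
    show "av (coeff q j) \<le> 1" if "2 \<le> j" for j
    proof -
      have "coeff q j = (if j = 2 then 1 else 0)" using that
        by (auto simp: q_def coeff_pCons split: nat.split)
      then show ?thesis by simp
    qed
    show "1 * (1 / real p) < av (coeff q 1)" using p1 by (simp add: q_def av_minus1)
    show "av (coeff q 0) \<le> 1 / real p * av (coeff q 1)" using assms by (simp add: q_def av_minus1)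
  qed
  then obtain t where "poly q t = 0" by blast
  then have "t * t = t + w" by (simp add: q_def algebra_simps)
  then show ?thesis by blast
qed

end

lemma int_coeffs_bound:
  assumes "\<forall>a\<in>set cs. a \<in> (\<int> :: 'a::ring_1 set)"
  shows "\<exists>M. \<forall>a\<in>set cs. \<exists>n. \<bar>n\<bar> \<le> M \<and> a = of_int n"
  using assms
proof (induction cs)
  case Nil then show ?case by simp
next
  case (Cons c cs)
  then obtain M where M: "\<forall>a\<in>set cs. \<exists>n. \<bar>n\<bar> \<le> M \<and> a = of_int n" by auto
  obtain n where n: "c = of_int n" using Cons.prems by (auto elim: Ints_cases)
  show ?case
    by (rule exI[of _ "max M \<bar>n\<bar>"]) (use M n in force)
qed

context qp
begin

lemma alg_in_tilde:
  fixes r :: 'a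
  assumes alg: "algebraic r"
  shows "r \<in> tilde"
proof -
  obtain g where gZ: "\<And>i. coeff g i \<in> \<int>" and g0: "g \<noteq> 0" and gr: "poly g r = 0"
    using alg unfolding algebraic_def by blast
  have p1: "real p > 1" using p_gt1 by simp
  define Roots where "Roots = {x. poly g x = 0}"
  have finR: "finite Roots" using poly_roots_finite[OF g0] by (simp add: Roots_def)
  define D where "D = (\<lambda>x. av (x - r)) ` (Roots - {r})"
  define \<delta> where "\<delta> = Min (insert 1 D)"
  have finD: "finite D" using finR by (simp add: D_def)
  have \<delta>0: "\<delta> > 0"
    unfolding \<delta>_def using finD by (subst Min_gr_iff) (auto simp: D_def av_pos)
  have \<delta>D: "\<delta> \<le> av (x - r)" if "poly g x = 0" "x \<noteq> r" for x
    unfolding \<delta>_def using finD that by (intro Min_le) (auto simp: D_def Roots_def)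
  obtain k where k: "(1 / real p) ^ k < \<delta>" using real_arch_pow_inv[OF \<delta>0, of "1 / real p"] p1 by auto
  define s :: 'a where "s = of_int (int p ^ k)"
  have s_eq: "s = of_nat p ^ k" by (simp add: s_def)
  have avs: "av s = (1 / real p) ^ k" unfolding s_eq by (rule av_ppow)
  have snz: "s \<noteq> 0" using p1 by (simp add: s_eq)
  have pk0: "(1 / real p) ^ k > 0" using p1 by simp
  obtain c where c: "av (r - of_rat c) < (1 / real p) ^ k" using av_dense[OF pk0] by blast
  define cc :: 'a where "cc = of_rat c"
  define z where "z = (r - cc) / s"
  have avz: "av z < 1" using c avs pk0 by (simp add: z_def av_divide cc_def)
  have rz: "r = cc + s * z" using snz by (simp add: z_def)
  define w where "w = of_nat p * (z * z)"
  have avw: "av w \<le> 1 / real p"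
  proof -
    have "av (z * z) \<le> 1" using avz av_nonneg[of z] by (simp add: av_mult mult_le_one)
    then show ?thesis using av_p p1 by (simp add: w_def av_mult divide_le_cancel)
  qed
  obtain y where y: "y * y = y + w" using solve_quad[OF avw] by blast
  obtain u v where uv: "quotient_of c = (u, v)" by (cases "quotient_of c")
  have v0: "v > 0" using quotient_of_denom_pos[OF uv] .
  have ccuv: "cc = of_int u / of_int v"
    using quotient_of_div[OF uv] by (simp add: cc_def of_rat_divide)
  have ccv: "cc * of_int v = of_int u" using v0 by (simp add: ccuv)
  define cs where "cs = coeffs g"
  have csZ: "\<forall>a\<in>set cs. a \<in> \<int>" unfolding cs_def using gZ by (auto simp: coeffs_def)
  obtain M0 where M0: "\<forall>a\<in>set cs. \<exists>n. \<bar>n\<bar> \<le> M0 \<and> a = of_int n"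
    using int_coeffs_bound[OF csZ] by blast
  define M where "M = max M0 (max \<bar>u\<bar> (max \<bar>v\<bar> (int p ^ k + int p))) + 1"
  have M1: "M \<ge> 1" by (simp add: M_def)
  define I :: "'a set" where "I = of_int ` {-M..M}"
  have I_in: "of_int j \<in> I" if "\<bar>j\<bar> \<le> M" for j
    using that unfolding I_def by (intro imageI) (simp add: abs_le_iff)
  define A where "A = {r, cc, z, s * z, y, y * y, z * z, of_int (int p) * (z * z)} \<union> I \<union> hs cs r"
  have finA: "finite A" by (simp add: A_def I_def hs_finite)
  have rA: "r \<in> A" by (simp add: A_def)
  have adeq: "\<forall>f. resp A f \<longrightarrow> f r = r"
  proof (intro allI impI)
    fix f assume f: "resp A f"
    have fint: "f (of_int j) = of_int j" if "\<bar>j\<bar> \<le> M" for j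
      by (rule resp_int[OF f _ that]) (auto simp: A_def I_def)
    have IA: "of_int j \<in> A" if "\<bar>j\<bar> \<le> M" for j using I_in[OF that] by (simp add: A_def)
    have uM: "\<bar>u\<bar> \<le> M" and vM: "\<bar>v\<bar> \<le> M" and sM: "\<bar>int p ^ k\<bar> \<le> M" and pM: "\<bar>int p\<bar> \<le> M"
    proof -
      have "int p ^ k \<ge> 0" by simp
      then show "\<bar>u\<bar> \<le> M" "\<bar>v\<bar> \<le> M" "\<bar>int p ^ k\<bar> \<le> M" "\<bar>int p\<bar> \<le> M"
        unfolding M_def by linarith+
    qed
    have fcc: "f cc = cc"
    proof -
      have "cc \<in> A" by (simp add: A_def)
      moreover have "cc * of_int v \<in> A" using IA[OF uM] ccv by simp
      ultimately have "f (cc * of_int v) = f cc * f (of_int v)"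
        using resp_mult[OF f _ IA[OF vM]] by blast
      then have "of_int u = f cc * of_int v" using fint[OF uM] fint[OF vM] ccv by simp
      then show ?thesis using v0 ccv by (metis mult_cancel_right of_int_eq_0_iff less_irrefl)
    qed
    have fs: "f s = s" using fint[OF sM] by (simp add: s_def)
    have fr: "f r = cc + s * f z"
    proof -
      have "f r = f (cc + s * z)" using rz by simp
      also have "\<dots> = f cc + f (s * z)"
        by (rule resp_add[OF f]) (auto simp: A_def rz[symmetric])
      also have "f (s * z) = f s * f z"
        by (rule resp_mult[OF f _ _]) (use IA[OF sM] in \<open>auto simp: A_def s_def\<close>)
      finally show ?thesis using fcc fs by simp
    qed
    have fy: "f y * f y = f y + of_nat p * (f z * f z)"
    proof -
      have yy: "y * y = y + of_int (int p) * (z * z)" using y by (simp add: w_def)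
      have yyA: "y + of_int (int p) * (z * z) \<in> A" unfolding yy[symmetric] by (simp add: A_def)
      have "f (y * y) = f y * f y" by (rule resp_mult[OF f]) (auto simp: A_def)
      moreover have "f (y + of_int (int p) * (z * z)) = f y + f (of_int (int p) * (z * z))"
        by (rule resp_add[OF f _ _ yyA]) (auto simp: A_def)
      moreover have "f (of_int (int p) * (z * z)) = f (of_int (int p)) * f (z * z)"
        by (rule resp_mult[OF f IA[OF pM]]) (auto simp: A_def)
      moreover have "f (z * z) = f z * f z" by (rule resp_mult[OF f]) (auto simp: A_def)
      ultimately show ?thesis using yy fint[OF pM] by simp
    qed
    have avfz: "av (f z) \<le> 1" using zp_test[OF fy] .
    have fixc: "\<forall>a\<in>set cs. f a = a" using M0 fint by (force simp: M_def)
    have "f (poly (Poly cs) r) = poly (Poly cs) (f r)"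
      by (rule resp_horner[OF f rA _ fixc]) (auto simp: A_def)
    moreover have "poly (Poly cs) r = 0" using gr by (simp add: cs_def)
    moreover have "f 0 = 0" using resp_0[OF f] hs_0[of cs r] by (auto simp: A_def)
    ultimately have gfr: "poly g (f r) = 0" by (simp add: cs_def)
    have close: "av (f r - r) < \<delta>"
    proof -
      have eqfr: "f r - r = (cc - r) + s * f z" using fr by simp
      have "av (cc - r) < (1 / real p) ^ k" using c av_sub_sym by (simp add: cc_def)
      moreover have "av (s * f z) \<le> (1 / real p) ^ k" using avfz avs av_nonneg[of "f z"] pk0
        by (simp add: av_mult mult_left_le)
      ultimately have "av (f r - r) \<le> (1 / real p) ^ k"
        unfolding eqfr by (intro av_add_le) auto
      then show ?thesis using k by simp
    qed
    show "f r = r"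
    proof (rule ccontr)
      assume "f r \<noteq> r"
      then have "\<delta> \<le> av (f r - r)" using \<delta>D gfr by blast
      then show False using close by simp
    qed
  qed
  have "adequate A r" unfolding adequate_resp using finA rA adeq by blast
  then show ?thesis unfolding tilde_def by blast
qed

end

inductive_set Sg :: "nat \<Rightarrow> ((nat \<Rightarrow> 'a::comm_ring_1) \<Rightarrow> 'a) set" for k where
  Sg_proj: "i < k \<Longrightarrow> (\<lambda>x. x i) \<in> Sg k"
| Sg_const: "(\<lambda>x. of_int n) \<in> Sg k"
| Sg_add: "f \<in> Sg k \<Longrightarrow> g \<in> Sg k \<Longrightarrow> f + g \<in> Sg k"
| Sg_mult: "f \<in> Sg k \<Longrightarrow> g \<in> Sg k \<Longrightarrow> f * g \<in> Sg k"

lemma Sg_0: "0 \<in> Sg k"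
proof -
  have "(\<lambda>x. of_int 0 :: 'a) \<in> Sg k" by (rule Sg_const)
  then show ?thesis by (simp add: zero_fun_def)
qed

lemma Sg_1: "1 \<in> Sg k"
proof -
  have "(\<lambda>x. of_int 1 :: 'a) \<in> Sg k" by (rule Sg_const)
  then show ?thesis by (simp add: one_fun_def)
qed

lemma Sg_uminus: "f \<in> Sg k \<Longrightarrow> - f \<in> Sg k"
proof -
  assume f: "f \<in> Sg k"
  have "(\<lambda>x. of_int (-1) :: 'a) * f \<in> Sg k" by (rule Sg_mult[OF Sg_const f])
  moreover have "(\<lambda>x. of_int (-1) :: 'a) * f = - f" by (rule ext) simp
  ultimately show ?thesis by simp
qed

lemma Sg_diff: "f \<in> Sg k \<Longrightarrow> g \<in> Sg k \<Longrightarrow> f - g \<in> Sg k"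
  unfolding diff_conv_add_uminus by (rule Sg_add[OF _ Sg_uminus])

lemma Sg_of_nat: "of_nat n \<in> Sg k"
proof -
  have "(\<lambda>x. of_int (int n) :: 'a) \<in> Sg k" by (rule Sg_const)
  then show ?thesis by (simp add: of_nat_fun)
qed

lemma Sg_sum: "(\<And>i. i \<in> S \<Longrightarrow> f i \<in> Sg k) \<Longrightarrow> sum f S \<in> Sg k"
proof (induction S rule: infinite_finite_induct)
  case (infinite A)
  have "sum f A = 0" using infinite.hyps by (rule sum.infinite)
  then show ?case using Sg_0 by (simp only:)
next
  case empty then show ?case by (simp only: sum.empty) (rule Sg_0)
next
  case (insert x F)
  have "sum f (insert x F) = f x + sum f F" using insert.hyps by simp
  then show ?case using Sg_add[OF insert.prems[of x] insert.IH] insert.prems by (simp only: insertI1 insertI2)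
qed

lemma Sg_local: "c \<in> Sg k \<Longrightarrow> (\<And>i. i < k \<Longrightarrow> x i = x' i) \<Longrightarrow> c x = c x'"
proof (induction rule: Sg.induct)
  case (Sg_proj i) then show ?case by simp
next
  case (Sg_const n) then show ?case by simp
next
  case (Sg_add f g) then show ?case by (simp only: plus_fun_apply)
next
  case (Sg_mult f g) then show ?case by (simp only: times_fun_apply)
qed

lemma Sg_zero_const: "c \<in> Sg 0 \<Longrightarrow> \<exists>n. c = (\<lambda>x. of_int n)"
proof (induction rule: Sg.induct)
  case (Sg_add f g)
  then obtain n m where "f = (\<lambda>x. of_int n)" "g = (\<lambda>x. of_int m)" by blast
  then show ?case by (intro exI[of _ "n + m"]) (auto simp: plus_fun_def)
next
  case (Sg_mult f g)
  then obtain n m where "f = (\<lambda>x. of_int n)" "g = (\<lambda>x. of_int m)" by blast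
  then show ?case by (intro exI[of _ "n * m"]) (auto simp: times_fun_def)
next
  case (Sg_proj i) then show ?case by simp
next
  case (Sg_const n) then show ?case by blast
qed

definition ev :: "(nat \<Rightarrow> 'a::comm_ring_1) \<Rightarrow> ((nat \<Rightarrow> 'a) \<Rightarrow> 'a) poly \<Rightarrow> 'a poly" where
  "ev x P = map_poly (\<lambda>c. c x) P"

lemma coeff_ev [simp]: "coeff (ev x P) j = coeff P j x"
  unfolding ev_def by (subst coeff_map_poly) auto

lemma sum_fun_apply: "(sum g S) x = (\<Sum>i\<in>S. g i x)"
  by (induction S rule: infinite_finite_induct) auto

lemma pow_fun_apply: "(f ^ n) x = (f x) ^ n"
  by (induction n) (simp_all add: one_fun_def)

lemma degree_ev_le: "degree (ev x P) \<le> degree P"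
  by (rule degree_le) (simp add: coeff_eq_0)

lemma ev_add: "ev x (P + Q) = ev x P + ev x Q"
  by (rule poly_eqI) simp

lemma ev_diff: "ev x (P - Q) = ev x P - ev x Q"
  by (rule poly_eqI) simp

lemma ev_mult: "ev x (P * Q) = ev x P * ev x Q"
  by (rule poly_eqI) (simp add: coeff_mult sum_fun_apply)

lemma ev_smult: "ev x (smult c P) = smult (c x) (ev x P)"
  by (rule poly_eqI) simp

lemma ev_pCons: "ev x (pCons c P) = pCons (c x) (ev x P)"
  by (rule poly_eqI) (simp add: coeff_pCons split: nat.split)

lemma ev_0 [simp]: "ev x 0 = 0"
  by (rule poly_eqI) simp

definition fderiv :: "((nat \<Rightarrow> 'a::comm_ring_1) \<Rightarrow> 'a) poly \<Rightarrow> ((nat \<Rightarrow> 'a) \<Rightarrow> 'a) poly" where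
  "fderiv H = (\<Sum>j<degree H. monom (of_nat (Suc j) * coeff H (Suc j)) j)"

lemma coeff_fderiv: "coeff (fderiv H) j = (if j < degree H then of_nat (Suc j) * coeff H (Suc j) else 0)"
  unfolding fderiv_def by (simp add: coeff_sum coeff_monom)

lemma ev_fderiv: "ev x (fderiv P) = pderiv (ev x P)"
proof (rule poly_eqI)
  fix j
  show "coeff (ev x (fderiv P)) j = coeff (pderiv (ev x P)) j"
  proof (cases "j < degree P")
    case False
    then have "coeff P (Suc j) = 0" by (simp add: coeff_eq_0)
    then show ?thesis using False by (simp add: coeff_fderiv coeff_pderiv)
  qed (simp add: coeff_fderiv coeff_pderiv)
qed

lemma fderiv_Sg: "(\<forall>j. coeff P j \<in> Sg k) \<Longrightarrow> coeff (fderiv P) j \<in> Sg k"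
  unfolding coeff_fderiv using Sg_mult[OF Sg_of_nat[of "Suc j"], of "coeff P (Suc j)" k] Sg_0 by auto

lemma ev_eq_0_iff: "ev x P = 0 \<longleftrightarrow> (\<forall>j. coeff P j x = 0)"
  by (auto simp: poly_eq_iff)

lemma ev_local: "(\<forall>j. coeff P j \<in> Sg k) \<Longrightarrow> (\<And>i. i < k \<Longrightarrow> x i = x' i) \<Longrightarrow> ev x P = ev x' P"
proof (rule poly_eqI)
  fix j assume "\<forall>j. coeff P j \<in> Sg k" "\<And>i. i < k \<Longrightarrow> x i = x' i"
  then show "coeff (ev x P) j = coeff (ev x' P) j" using Sg_local[of "coeff P j" k x x'] by simp
qed

lemma coeff_extract:
  assumes "e \<in> Sg (Suc k)"
  shows "\<exists>P. (\<forall>j. coeff P j \<in> Sg k) \<and> (\<forall>x. e x = poly (ev x P) (x k))"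
  using assms
proof (induction rule: Sg.induct)
  case (Sg_proj i)
  show ?case
  proof (cases "i = k")
    case True
    show ?thesis
      by (rule exI[of _ "[:0, 1:]"]) (auto simp: True coeff_pCons ev_pCons Sg_0 Sg_1 split: nat.split)
  next
    case False
    then have ik: "i < k" using Sg_proj by simp
    show ?thesis
      by (rule exI[of _ "[:\<lambda>x. x i:]"]) (auto simp: coeff_pCons ev_pCons Sg_0 Sg.Sg_proj[OF ik] split: nat.split)
  qed
next
  case (Sg_const n)
  show ?case
    by (rule exI[of _ "[:\<lambda>x. of_int n:]"]) (auto simp: coeff_pCons ev_pCons Sg_0 Sg.Sg_const split: nat.split)
next
  case (Sg_add f g)
  then obtain P Q where P: "\<forall>j. coeff P j \<in> Sg k" "\<forall>x. f x = poly (ev x P) (x k)"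
    and Q: "\<forall>j. coeff Q j \<in> Sg k" "\<forall>x. g x = poly (ev x Q) (x k)" by blast
  have c: "\<forall>j. coeff (P + Q) j \<in> Sg k" unfolding coeff_add using P(1) Q(1) Sg.Sg_add by blast
  have e: "\<forall>x. (f + g) x = poly (ev x (P + Q)) (x k)"
    using P(2) Q(2) by (simp only: ev_add poly_add plus_fun_apply) simp
  show ?case using c e by blast
next
  case (Sg_mult f g)
  then obtain P Q where P: "\<forall>j. coeff P j \<in> Sg k" "\<forall>x. f x = poly (ev x P) (x k)"
    and Q: "\<forall>j. coeff Q j \<in> Sg k" "\<forall>x. g x = poly (ev x Q) (x k)" by blast
  have c: "\<forall>j. coeff (P * Q) j \<in> Sg k" unfolding coeff_mult
    using P(1) Q(1) by (intro allI Sg_sum Sg.Sg_mult) auto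
  have e: "\<forall>x. (f * g) x = poly (ev x (P * Q)) (x k)"
    using P(2) Q(2) by (simp only: ev_mult poly_mult times_fun_apply) simp
  show ?case using c e by blast
qed

lemma pdiv_closed:
  fixes P H :: "'b::comm_ring_1 poly"
  assumes S0: "0 \<in> S" and Sadd: "\<And>a b. a \<in> S \<Longrightarrow> b \<in> S \<Longrightarrow> a + b \<in> S"
    and Smult: "\<And>a b. a \<in> S \<Longrightarrow> b \<in> S \<Longrightarrow> a * b \<in> S"
    and Sneg: "\<And>a. a \<in> S \<Longrightarrow> - a \<in> S"
    and HS: "\<forall>j. coeff H j \<in> S" and H0: "H \<noteq> 0"
  shows "(\<forall>j. coeff P j \<in> S) \<Longrightarrow> \<exists>N Q R. smult (lead_coeff H ^ N) P = Q * H + R \<and>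
            (R = 0 \<or> degree R < degree H) \<and> (\<forall>j. coeff R j \<in> S)"
proof (induction "degree P" arbitrary: P rule: less_induct)
  case less
  show ?case
  proof (cases "P = 0 \<or> degree P < degree H")
    case True
    then show ?thesis
      by (intro exI[of _ 0] exI[of _ "0 :: 'b poly"] exI[of _ P]) (use less.prems in auto)
  next
    case False
    then have Pnz: "P \<noteq> 0" and dle: "degree H \<le> degree P" by auto
    define n where "n = degree P"
    define d where "d = degree H"
    define l where "l = lead_coeff H"
    define P' where "P' = smult l P - monom (coeff P n) (n - d) * H"
    have cP': "coeff P' j = l * coeff P j - (if j < n - d then 0 else coeff P n * coeff H (j - (n - d)))" for j
      by (simp add: P'_def coeff_monom_mult)
    have vanish: "coeff P' j = 0" if "j \<ge> n" for j
    proof (cases "j = n")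
      case True
      then show ?thesis using dle by (simp add: cP' n_def d_def l_def)
    next
      case False
      with that have "j > n" by simp
      then have "coeff P j = 0" "coeff H (j - (n - d)) = 0"
        using dle by (auto simp: n_def d_def coeff_eq_0)
      then show ?thesis by (simp add: cP')
    qed
    have smaller: "P' = 0 \<or> degree P' < n"
    proof (rule ccontr)
      assume "\<not> (P' = 0 \<or> degree P' < n)"
      then have "P' \<noteq> 0" "degree P' \<ge> n" by auto
      then have "coeff P' (degree P') \<noteq> 0" by simp
      then show False using vanish \<open>degree P' \<ge> n\<close> by blast
    qed
    have lS: "l \<in> S" using HS by (simp add: l_def)
    have P'S: "\<forall>j. coeff P' j \<in> S"
    proof
      fix j
      have 1: "l * coeff P j \<in> S" using lS less.prems Smult by blast
      have 2: "(if j < n - d then 0 else coeff P n * coeff H (j - (n - d))) \<in> S"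
        using S0 Smult less.prems HS by auto
      show "coeff P' j \<in> S" unfolding cP' diff_conv_add_uminus using Sadd[OF 1 Sneg[OF 2]] .
    qed
    obtain N Q R where NQR: "smult (l ^ N) P' = Q * H + R" "R = 0 \<or> degree R < degree H" "\<forall>j. coeff R j \<in> S"
    proof (cases "P' = 0")
      case True
      show ?thesis by (rule that[of 0 0 0]) (use True S0 in auto)
    next
      case False
      then have "degree P' < degree P" using smaller by (simp add: n_def)
      then show ?thesis using less.hyps[OF _ P'S] that unfolding l_def by blast
    qed
    have "smult (l ^ Suc N) P = smult (l ^ N) (smult l P)" by (simp add: mult.commute)
    also have "smult l P = P' + monom (coeff P n) (n - d) * H" by (simp add: P'_def)
    also have "smult (l ^ N) (P' + monom (coeff P n) (n - d) * H) =
        smult (l ^ N) P' + smult (l ^ N) (monom (coeff P n) (n - d) * H)" by (rule smult_add_right)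
    also have "\<dots> = Q * H + R + smult (l ^ N) (monom (coeff P n) (n - d)) * H"
      using NQR(1) by (simp only: mult_smult_left)
    also have "\<dots> = (Q + smult (l ^ N) (monom (coeff P n) (n - d))) * H + R"
      by (simp only: distrib_right add.assoc add.commute[of R])
    finally show ?thesis using NQR(2,3) unfolding l_def by blast
  qed
qed

lemma finite_min_eta:
  fixes Q :: "nat \<Rightarrow> real \<Rightarrow> bool"
  assumes "\<And>j. j \<le> d \<Longrightarrow> \<exists>\<eta>>0. Q j \<eta>"
    and mono: "\<And>j \<eta> \<eta>'. Q j \<eta> \<Longrightarrow> 0 < \<eta>' \<Longrightarrow> \<eta>' \<le> \<eta> \<Longrightarrow> Q j \<eta>'"
  shows "\<exists>\<eta>>0. \<forall>j\<le>d. Q j \<eta>"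
  using assms(1)
proof (induction d)
  case 0 then show ?case by auto
next
  case (Suc d)
  obtain \<eta>1 where 1: "\<eta>1 > 0" "\<forall>j\<le>d. Q j \<eta>1" using Suc by auto
  obtain \<eta>2 where 2: "\<eta>2 > 0" "Q (Suc d) \<eta>2" using Suc.prems by auto
  show ?case
    by (rule exI[of _ "min \<eta>1 \<eta>2"]) (use 1 2 mono in \<open>auto simp: le_Suc_eq\<close>)
qed

context qp
begin

lemma Sg_cont:
  fixes a :: "nat \<Rightarrow> 'a"
  assumes "c \<in> Sg k"
  shows "\<delta> > 0 \<Longrightarrow> \<exists>\<eta>>0. \<forall>b. (\<forall>i<k. av (b i - a i) < \<eta>) \<longrightarrow> av (c b - c a) < \<delta>"
  using assms
proof (induction arbitrary: \<delta> rule: Sg.induct)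
  case (Sg_proj i)
  then show ?case by (intro exI[of _ \<delta>]) auto
next
  case (Sg_const n)
  then show ?case by (intro exI[of _ 1]) auto
next
  case (Sg_add f g)
  obtain \<eta>1 where 1: "\<eta>1 > 0" "\<forall>b. (\<forall>i<k. av (b i - a i) < \<eta>1) \<longrightarrow> av (f b - f a) < \<delta>"
    using Sg_add.IH(1)[OF Sg_add.prems] by blast
  obtain \<eta>2 where 2: "\<eta>2 > 0" "\<forall>b. (\<forall>i<k. av (b i - a i) < \<eta>2) \<longrightarrow> av (g b - g a) < \<delta>"
    using Sg_add.IH(2)[OF Sg_add.prems] by blast
  show ?case
  proof (intro exI[of _ "min \<eta>1 \<eta>2"] conjI allI impI)
    show "min \<eta>1 \<eta>2 > 0" using 1 2 by simp
    fix b assume "\<forall>i<k. av (b i - a i) < min \<eta>1 \<eta>2"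
    then have "av (f b - f a) < \<delta>" "av (g b - g a) < \<delta>" using 1 2 by auto
    then have "av ((f b - f a) + (g b - g a)) < \<delta>" by (rule av_add_less)
    then show "av ((f + g) b - (f + g) a) < \<delta>" by (simp add: algebra_simps)
  qed
next
  case (Sg_mult f g)
  define A1 where "A1 = av (f a)"
  define A2 where "A2 = av (g a)"
  define D where "D = 2 + A1 + A2"
  define m where "m = min 1 \<delta>"
  have A1: "A1 \<ge> 0" and A2: "A2 \<ge> 0" by (simp_all add: A1_def A2_def av_nonneg)
  have D: "D > 0" using A1 A2 by (simp add: D_def)
  have m: "m > 0" "m \<le> 1" "m \<le> \<delta>" using Sg_mult.prems by (auto simp: m_def)
  define d where "d = m / D"
  have d0: "d > 0" using m D by (simp add: d_def)
  have dD: "d * D = m" using D by (simp add: d_def)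
  obtain \<eta>1 where 1: "\<eta>1 > 0" "\<forall>b. (\<forall>i<k. av (b i - a i) < \<eta>1) \<longrightarrow> av (f b - f a) < d"
    using Sg_mult.IH(1)[OF d0] by blast
  obtain \<eta>2 where 2: "\<eta>2 > 0" "\<forall>b. (\<forall>i<k. av (b i - a i) < \<eta>2) \<longrightarrow> av (g b - g a) < d"
    using Sg_mult.IH(2)[OF d0] by blast
  show ?case
  proof (intro exI[of _ "min \<eta>1 \<eta>2"] conjI allI impI)
    show "min \<eta>1 \<eta>2 > 0" using 1 2 by simp
    fix b assume "\<forall>i<k. av (b i - a i) < min \<eta>1 \<eta>2"
    then have u: "av (f b - f a) < d" and v: "av (g b - g a) < d" using 1 2 by auto
    define u where "u = f b - f a"
    define v where "v = g b - g a"
    have eq: "(f * g) b - (f * g) a = u * v + u * g a + f a * v"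
      by (simp add: u_def v_def algebra_simps)
    have t1: "av (u * v) < \<delta>"
    proof -
      have "av (u * v) \<le> d * d" unfolding av_mult using u v av_nonneg d0
        by (intro mult_mono) (auto simp: u_def v_def less_imp_le)
      also have "d * d < d * D"
      proof -
        have "d \<le> m / 2" unfolding d_def using m A1 A2 by (intro divide_left_mono) (auto simp: D_def)
        then have "d < D" using m D A1 A2 by (simp add: D_def)
        then show ?thesis using d0 by simp
      qed
      finally show ?thesis using dD m by simp
    qed
    have t2: "av (u * g a) < \<delta>"
    proof -
      have "av (u * g a) \<le> d * A2" unfolding av_mult A2_def using u av_nonneg
        by (intro mult_right_mono) (auto simp: u_def less_imp_le)
      also have "d * A2 < d * D" using d0 A1 by (simp add: D_def)
      finally show ?thesis using dD m by simp
    qed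
    have t3: "av (f a * v) < \<delta>"
    proof -
      have "av (f a * v) \<le> A1 * d" unfolding av_mult A1_def using v av_nonneg
        by (intro mult_left_mono) (auto simp: v_def less_imp_le)
      also have "A1 * d < D * d" using d0 A2 by (simp add: D_def)
      finally show ?thesis using dD m by (simp add: mult.commute)
    qed
    show "av ((f * g) b - (f * g) a) < \<delta>" unfolding eq
      by (intro av_add_less t1 t2 t3)
  qed
qed

definition claim :: "(nat \<Rightarrow> 'a) \<Rightarrow> nat \<Rightarrow> bool" where
  "claim a k \<longleftrightarrow> (\<forall>\<epsilon>>0. \<exists>b. b 0 \<noteq> a 0 \<and> (\<forall>i<k. av (b i - a i) < \<epsilon>) \<and>
      (\<forall>c\<in>Sg k. c a = 0 \<longrightarrow> c b = 0))"

lemma claim_base: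
  fixes a :: "nat \<Rightarrow> 'a"
  assumes tr: "\<not> algebraic (a 0)"
  shows "claim a 1"
  unfolding claim_def
proof (intro allI impI)
  fix \<epsilon> :: real assume e: "\<epsilon> > 0"
  have p1: "real p > 1" using p_gt1 by simp
  obtain N where N: "(1 / real p) ^ N < \<epsilon>" using real_arch_pow_inv[OF e, of "1 / real p"] p1 by auto
  define b where "b = a(0 := a 0 + of_nat p ^ N)"
  have b0: "b 0 \<noteq> a 0" using p1 by (simp add: b_def)
  have close: "\<forall>i<1. av (b i - a i) < \<epsilon>" using N by (simp add: b_def av_ppow)
  have tf: "\<forall>c\<in>Sg 1. c a = 0 \<longrightarrow> c b = 0"
  proof (intro ballI impI)
    fix c :: "(nat \<Rightarrow> 'a) \<Rightarrow> 'a" assume c: "c \<in> Sg 1" "c a = 0"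
    obtain P where P: "\<forall>j. coeff P j \<in> Sg 0" "\<forall>x. c x = poly (ev x P) (x 0)"
      using coeff_extract[of c 0] c(1) by auto
    have evx: "ev x P = ev a P" for x by (rule ev_local[OF P(1)]) simp
    have "ev a P = 0"
    proof (rule ccontr)
      assume nz: "ev a P \<noteq> 0"
      have "coeff (ev a P) j \<in> \<int>" for j
      proof -
        obtain n where "coeff P j = (\<lambda>x. of_int n)" using Sg_zero_const P(1) by blast
        then show ?thesis by simp
      qed
      moreover have "poly (ev a P) (a 0) = 0" using c(2) P(2) by simp
      ultimately have "algebraic (a 0)" using nz by (intro algebraicI) auto
      then show False using tr by simp
    qed
    then show "c b = 0" using P(2) evx[of b] by simp
  qed
  show "\<exists>b. b 0 \<noteq> a 0 \<and> (\<forall>i<1. av (b i - a i) < \<epsilon>) \<and> (\<forall>c\<in>Sg 1. c a = 0 \<longrightarrow> c b = 0)"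
    using b0 close tf by blast
qed

end

context qp
begin

lemma claim_step:
  fixes a :: "nat \<Rightarrow> 'a"
  assumes k1: "k \<ge> 1" and IH: "claim a k"
  shows "claim a (Suc k)"
proof -
  define y where "y = a k"
  define Rel where "Rel = {P. (\<forall>j. coeff P j \<in> Sg k) \<and> ev a P \<noteq> 0 \<and> poly (ev a P) y = 0}"
  have upd: "(b(k := t)) 0 = b 0" for b :: "nat \<Rightarrow> 'a" and t using k1 by simp
  have upd_ev: "ev (b(k := t)) P = ev b P" if "\<forall>j. coeff P j \<in> Sg k" for b t P
    by (rule ev_local[OF that]) simp
  show ?thesis
  proof (cases "Rel = {}")
    case True
    show ?thesis unfolding claim_def
    proof (intro allI impI)
      fix \<epsilon> :: real assume e: "\<epsilon> > 0"
      obtain b where b: "b 0 \<noteq> a 0" "\<forall>i<k. av (b i - a i) < \<epsilon>" "\<forall>c\<in>Sg k. c a = 0 \<longrightarrow> c b = 0"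
        using IH e unfolding claim_def by blast
      define b' where "b' = b(k := y)"
      have b'0: "b' 0 \<noteq> a 0" using b(1) upd by (simp add: b'_def)
      have close: "\<forall>i<Suc k. av (b' i - a i) < \<epsilon>"
        using b(2) e by (auto simp: b'_def y_def less_Suc_eq)
      have tf: "\<forall>c\<in>Sg (Suc k). c a = 0 \<longrightarrow> c b' = 0"
      proof (intro ballI impI)
        fix e' :: "(nat \<Rightarrow> 'a) \<Rightarrow> 'a" assume e': "e' \<in> Sg (Suc k)" "e' a = 0"
        obtain P where P: "\<forall>j. coeff P j \<in> Sg k" "\<forall>x. e' x = poly (ev x P) (x k)"
          using coeff_extract[OF e'(1)] by blast
        have "poly (ev a P) y = 0" using e'(2) P(2) by (simp add: y_def)
        then have "ev a P = 0" using True P(1) unfolding Rel_def by blast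
        then have "\<forall>j. coeff P j a = 0" by (simp add: ev_eq_0_iff)
        then have "\<forall>j. coeff P j b = 0" using b(3) P(1) by blast
        then have "ev b P = 0" by (simp add: ev_eq_0_iff)
        then show "e' b' = 0" using P(2) upd_ev[OF P(1)] by (simp add: b'_def)
      qed
      show "\<exists>b. b 0 \<noteq> a 0 \<and> (\<forall>i<Suc k. av (b i - a i) < \<epsilon>) \<and> (\<forall>c\<in>Sg (Suc k). c a = 0 \<longrightarrow> c b = 0)"
        using b'0 close tf by blast
    qed
  next
    case False
    then obtain H1 where "H1 \<in> Rel" by blast
    then obtain H where HR: "H \<in> Rel" and Hmin: "\<forall>P. P \<in> Rel \<longrightarrow> degree (ev a H) \<le> degree (ev a P)"
      using ex_has_least_nat[of "\<lambda>P. P \<in> Rel" H1 "\<lambda>P. degree (ev a P)"] by blast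
    define d where "d = degree (ev a H)"
    have HS: "\<forall>j. coeff H j \<in> Sg k" and Hnz: "ev a H \<noteq> 0" and Hy: "poly (ev a H) y = 0"
      using HR by (auto simp: Rel_def)
    define H0 where "H0 = poly_cutoff (Suc d) H"
    have cH0: "coeff H0 j = (if j \<le> d then coeff H j else 0)" for j
      by (simp add: H0_def coeff_poly_cutoff)
    have H0S: "\<forall>j. coeff H0 j \<in> Sg k"
    proof
      fix j show "coeff H0 j \<in> Sg k"
      proof (cases "j \<le> d")
        case True then show ?thesis using HS by (simp add: cH0)
      next
        case False then have "coeff H0 j = 0" by (simp add: cH0)
        then show ?thesis using Sg_0 by metis
      qed
    qed
    have evH0: "ev a H0 = ev a H"
    proof (rule poly_eqI)
      fix j
      show "coeff (ev a H0) j = coeff (ev a H) j"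
      proof (cases "j \<le> d")
        case False
        then have "coeff (ev a H) j = 0" using coeff_eq_0[of "ev a H" j] by (simp only: d_def not_le)
        then show ?thesis using False by (simp add: cH0)
      qed (simp add: cH0)
    qed
    define l where "l = coeff H0 d"
    have la: "l a \<noteq> 0"
    proof -
      have "l a = coeff (ev a H) d" by (simp add: l_def cH0)
      moreover have "coeff (ev a H) d \<noteq> 0" using leading_coeff_neq_0[OF Hnz] unfolding d_def .
      ultimately show ?thesis by simp
    qed
    have lnz: "l \<noteq> 0" using la by auto
    have degH0: "degree H0 = d"
    proof (rule antisym)
      show "degree H0 \<le> d" by (rule degree_le) (simp add: cH0)
      show "d \<le> degree H0" using lnz by (intro le_degree) (simp add: l_def)
    qed
    have lH0: "lead_coeff H0 = l" using degH0 by (simp add: l_def)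
    have H0nz: "H0 \<noteq> 0" using lnz degH0 l_def by auto
    define h where "h = ev a H0"
    have hy: "poly h y = 0" using Hy evH0 by (simp add: h_def)
    have degh: "degree h = d" using evH0 by (simp add: h_def d_def)
    have hnz: "h \<noteq> 0" using evH0 Hnz by (simp add: h_def)
    have relmin: "d \<le> degree (ev a P)" if "P \<in> Rel" for P using Hmin that by (simp add: d_def)
    have d1: "d \<ge> 1"
    proof (rule ccontr)
      assume "\<not> d \<ge> 1"
      then have "d = 0" by simp
      then obtain c where "h = [:c:]" using degh by (metis degree_eq_zeroE)
      then show False using hy hnz by simp
    qed
    have simple: "poly (pderiv h) y \<noteq> 0"
    proof
      assume py: "poly (pderiv h) y = 0"
      have "fderiv H0 \<in> Rel"
      proof -
        have "\<forall>j. coeff (fderiv H0) j \<in> Sg k" using fderiv_Sg[OF H0S] by blast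
        moreover have "ev a (fderiv H0) = pderiv h" by (simp add: ev_fderiv h_def)
        moreover have "pderiv h \<noteq> 0" using d1 degh by (simp add: pderiv_eq_0_iff)
        ultimately show ?thesis using py by (simp add: Rel_def)
      qed
      then have "d \<le> degree (ev a (fderiv H0))" by (rule relmin)
      then have "d \<le> degree (pderiv h)" by (simp only: ev_fderiv h_def)
      moreover have "degree (pderiv h) = d - 1" using degh by (simp add: degree_pderiv)
      ultimately show False using d1 by simp
    qed
    show ?thesis unfolding claim_def
    proof (intro allI impI)
      fix \<epsilon> :: real assume e: "\<epsilon> > 0"
      obtain \<delta> where \<delta>: "\<delta> > 0" and hens: "\<forall>g. degree g \<le> degree h \<longrightarrow>
           (\<forall>j\<le>degree h. av (coeff g j - coeff h j) < \<delta>) \<longrightarrow> (\<exists>y'. poly g y' = 0 \<and> av (y' - y) < \<epsilon>)"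
        using hensel_perturb[OF hy simple e] by blast
      define \<delta>' where "\<delta>' = min \<delta> (av (l a))"
      have \<delta>'0: "\<delta>' > 0" using \<delta> la av_pos by (simp add: \<delta>'_def)
      have "\<exists>\<eta>>0. \<forall>j\<le>d. \<forall>b. (\<forall>i<k. av (b i - a i) < \<eta>) \<longrightarrow> av (coeff H0 j b - coeff H0 j a) < \<delta>'"
      proof (rule finite_min_eta)
        fix j assume "j \<le> d"
        show "\<exists>\<eta>>0. \<forall>b. (\<forall>i<k. av (b i - a i) < \<eta>) \<longrightarrow> av (coeff H0 j b - coeff H0 j a) < \<delta>'"
          using Sg_cont[OF H0S[rule_format, of j] \<delta>'0] by blast
      next
        fix j \<eta> \<eta>' assume "\<forall>b. (\<forall>i<k. av (b i - a i) < \<eta>) \<longrightarrow> av (coeff H0 j b - coeff H0 j a) < \<delta>'"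
          "0 < \<eta>'" "\<eta>' \<le> \<eta>"
        then show "\<forall>b. (\<forall>i<k. av (b i - a i) < \<eta>') \<longrightarrow> av (coeff H0 j b - coeff H0 j a) < \<delta>'"
          by (meson less_le_trans)
      qed
      then obtain \<eta> where \<eta>: "\<eta> > 0" and cont: "\<forall>j\<le>d. \<forall>b. (\<forall>i<k. av (b i - a i) < \<eta>) \<longrightarrow>
          av (coeff H0 j b - coeff H0 j a) < \<delta>'" by blast
      obtain b where b: "b 0 \<noteq> a 0" "\<forall>i<k. av (b i - a i) < min \<epsilon> \<eta>" "\<forall>c\<in>Sg k. c a = 0 \<longrightarrow> c b = 0"
        using IH e \<eta> unfolding claim_def by (metis min_less_iff_conj)
      have bclose: "\<forall>i<k. av (b i - a i) < \<eta>" using b(2) by simp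
      define g where "g = ev b H0"
      have degg: "degree g \<le> degree h"
      proof -
        have "degree g \<le> d" unfolding g_def by (rule degree_le) (simp add: cH0)
        then show ?thesis using degh by simp
      qed
      have gclose: "\<forall>j\<le>degree h. av (coeff g j - coeff h j) < \<delta>"
      proof (intro allI impI)
        fix j assume "j \<le> degree h"
        then have "av (coeff H0 j b - coeff H0 j a) < \<delta>'" using cont bclose degh by auto
        then show "av (coeff g j - coeff h j) < \<delta>" by (simp add: g_def h_def \<delta>'_def)
      qed
      obtain y' where y': "poly g y' = 0" "av (y' - y) < \<epsilon>" using hens degg gclose by blast
      have lb: "l b \<noteq> 0"
      proof
        assume "l b = 0"
        moreover have "av (l b - l a) < av (l a)"
          using cont bclose d1 by (auto simp: l_def \<delta>'_def)
        ultimately show False by simp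
      qed
      define b' where "b' = b(k := y')"
      have b'0: "b' 0 \<noteq> a 0" using b(1) upd by (simp add: b'_def)
      have close: "\<forall>i<Suc k. av (b' i - a i) < \<epsilon>"
        using b(2) y'(2) by (auto simp: b'_def y_def less_Suc_eq)
      have tf: "\<forall>c\<in>Sg (Suc k). c a = 0 \<longrightarrow> c b' = 0"
      proof (intro ballI impI)
        fix e' :: "(nat \<Rightarrow> 'a) \<Rightarrow> 'a" assume e': "e' \<in> Sg (Suc k)" "e' a = 0"
        obtain P where P: "\<forall>j. coeff P j \<in> Sg k" "\<forall>x. e' x = poly (ev x P) (x k)"
          using coeff_extract[OF e'(1)] by blast
        obtain N Q R where NQR: "smult (lead_coeff H0 ^ N) P = Q * H0 + R"
          "R = 0 \<or> degree R < degree H0" "\<forall>j. coeff R j \<in> Sg k"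
          using pdiv_closed[of "Sg k" H0 P] Sg_0 Sg_add Sg_mult Sg_uminus H0S H0nz P(1) by blast
        have evs: "smult (l x ^ N) (ev x P) = ev x Q * ev x H0 + ev x R" for x
        proof -
          have "ev x (smult (l ^ N) P) = ev x (Q * H0 + R)" using NQR(1) lH0 by simp
          then show ?thesis by (simp add: ev_smult ev_add ev_mult pow_fun_apply)
        qed
        have "l a ^ N * poly (ev a P) y = poly (ev a Q) y * poly h y + poly (ev a R) y"
          using arg_cong[OF evs[of a], of "\<lambda>q. poly q y"] by (simp add: h_def)
        moreover have "poly (ev a P) y = 0" using e'(2) P(2) by (simp add: y_def)
        ultimately have Ry: "poly (ev a R) y = 0" using hy by simp
        have "ev a R = 0"
        proof (rule ccontr)
          assume nz: "ev a R \<noteq> 0"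
          then have "R \<in> Rel" using Ry NQR(3) by (simp add: Rel_def)
          then have "d \<le> degree (ev a R)" by (rule relmin)
          also have "\<dots> \<le> degree R" by (rule degree_ev_le)
          finally have "d \<le> degree R" .
          moreover have "R \<noteq> 0" using nz by auto
          ultimately show False using NQR(2) degH0 by simp
        qed
        then have "\<forall>j. coeff R j a = 0" by (simp add: ev_eq_0_iff)
        then have "\<forall>j. coeff R j b = 0" using b(3) NQR(3) by blast
        then have evbR: "ev b R = 0" by (simp add: ev_eq_0_iff)
        have "l b ^ N * poly (ev b P) y' = poly (ev b Q) y' * poly g y' + poly (ev b R) y'"
          using arg_cong[OF evs[of b], of "\<lambda>q. poly q y'"] by (simp add: g_def)
        then have "l b ^ N * poly (ev b P) y' = 0" using y'(1) evbR by simp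
        then have "poly (ev b P) y' = 0" using lb by simp
        then show "e' b' = 0" using P(2) upd_ev[OF P(1)] by (simp add: b'_def)
      qed
      show "\<exists>b. b 0 \<noteq> a 0 \<and> (\<forall>i<Suc k. av (b i - a i) < \<epsilon>) \<and> (\<forall>c\<in>Sg (Suc k). c a = 0 \<longrightarrow> c b = 0)"
        using b'0 close tf by blast
    qed
  qed
qed

end

context qp
begin

lemma claim_all:
  fixes a :: "nat \<Rightarrow> 'a"
  assumes "\<not> algebraic (a 0)" "k \<ge> 1"
  shows "claim a k"
  using assms(2)
proof (induction k rule: dec_induct)
  case base then show ?case using claim_base[of a] assms(1) by blast
next
  case (step k) then show ?case using claim_step by blast
qed

lemma tilde_imp_alg:
  fixes r :: 'a
  assumes "r \<in> tilde"
  shows "algebraic r"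
proof (rule ccontr)
  assume tr: "\<not> algebraic r"
  obtain A where ad: "adequate A r" using assms unfolding tilde_def by blast
  then have finA: "finite A" and rA: "r \<in> A" and fixf: "\<forall>f. resp A f \<longrightarrow> f r = r"
    unfolding adequate_resp by auto
  obtain xs where xs: "distinct xs" "set xs = A - {r}"
    using finite_distinct_list[of "A - {r}"] finA by blast
  define as where "as = r # xs"
  have das: "distinct as" using xs by (simp add: as_def)
  have sas: "set as = A" using xs rA by (auto simp: as_def)
  define m where "m = length as"
  define a where "a i = as ! i" for i
  have a0: "a 0 = r" by (simp add: a_def as_def)
  have m1: "m \<ge> 1" by (simp add: m_def as_def)
  have "claim a m" using claim_all[of a m] tr a0 m1 by simp
  then obtain b where b: "b 0 \<noteq> a 0" "\<forall>c\<in>Sg m. c a = 0 \<longrightarrow> c b = 0"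
    unfolding claim_def using zero_less_one by blast
  define f where "f x = b (SOME i. i < m \<and> as ! i = x)" for x
  have fidx: "f (as ! i) = b i" if "i < m" for i
  proof -
    have "\<exists>i'. i' < m \<and> as ! i' = as ! i" using that by blast
    then have "(SOME i'. i' < m \<and> as ! i' = as ! i) < m \<and> as ! (SOME i'. i' < m \<and> as ! i' = as ! i) = as ! i"
      by (rule someI_ex)
    then have "(SOME i'. i' < m \<and> as ! i' = as ! i) = i"
      using das that nth_eq_iff_index_eq unfolding m_def by blast
    then show ?thesis by (simp add: f_def)
  qed
  have inA: "\<exists>i<m. as ! i = x" if "x \<in> A" for x
    using that sas by (auto simp: m_def in_set_conv_nth)
  have proj: "(\<lambda>x. x i) \<in> Sg m" if "i < m" for i using that by (rule Sg_proj)
  have resp: "resp A f"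
    unfolding resp_def
  proof (intro conjI impI ballI)
    assume "1 \<in> A"
    then obtain i where i: "i < m" "as ! i = 1" using inA by blast
    have "(\<lambda>x. x i) - 1 \<in> Sg m" by (rule Sg_diff[OF proj[OF i(1)] Sg_1])
    moreover have "((\<lambda>x. x i) - 1) a = 0" using i by (simp add: a_def)
    ultimately have "((\<lambda>x. x i) - 1) b = 0" using b(2) by blast
    then have "b i = 1" by simp
    then show "f 1 = 1" using fidx[OF i(1)] i(2) by simp
  next
    fix x1 x2 assume x: "x1 \<in> A" "x2 \<in> A" "x1 + x2 \<in> A"
    obtain i where i: "i < m" "as ! i = x1" using inA x(1) by blast
    obtain j where j: "j < m" "as ! j = x2" using inA x(2) by blast
    obtain l where l: "l < m" "as ! l = x1 + x2" using inA x(3) by blast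
    have "(\<lambda>x. x i) + (\<lambda>x. x j) - (\<lambda>x. x l) \<in> Sg m"
      by (intro Sg_diff Sg_add proj i(1) j(1) l(1))
    moreover have "((\<lambda>x. x i) + (\<lambda>x. x j) - (\<lambda>x. x l)) a = 0" using i j l by (simp add: a_def)
    ultimately have "((\<lambda>x. x i) + (\<lambda>x. x j) - (\<lambda>x. x l)) b = 0" using b(2) by blast
    then have "b l = b i + b j" by simp
    then show "f (x1 + x2) = f x1 + f x2"
      using fidx[OF i(1)] fidx[OF j(1)] fidx[OF l(1)] i(2) j(2) l(2) by simp
  next
    fix x1 x2 assume x: "x1 \<in> A" "x2 \<in> A" "x1 * x2 \<in> A"
    obtain i where i: "i < m" "as ! i = x1" using inA x(1) by blast
    obtain j where j: "j < m" "as ! j = x2" using inA x(2) by blast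
    obtain l where l: "l < m" "as ! l = x1 * x2" using inA x(3) by blast
    have "(\<lambda>x. x i) * (\<lambda>x. x j) - (\<lambda>x. x l) \<in> Sg m"
      by (intro Sg_diff Sg_mult proj i(1) j(1) l(1))
    moreover have "((\<lambda>x. x i) * (\<lambda>x. x j) - (\<lambda>x. x l)) a = 0" using i j l by (simp add: a_def)
    ultimately have "((\<lambda>x. x i) * (\<lambda>x. x j) - (\<lambda>x. x l)) b = 0" using b(2) by blast
    then have "b l = b i * b j" by simp
    then show "f (x1 * x2) = f x1 * f x2"
      using fidx[OF i(1)] fidx[OF j(1)] fidx[OF l(1)] i(2) j(2) l(2) by simp
  qed
  have "f r = b 0" using fidx[of 0] m1 by (simp add: as_def)
  then have "f r \<noteq> r" using b(1) a0 by simp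
  then show False using fixf resp by blast
qed

end

theorem theorem7:
  fixes p :: nat and av :: "'a::field_char_0 \<Rightarrow> real"
  assumes "prime p" and "is_Qp p av"
  shows "(tilde :: 'a set) = {x. algebraic x}"
proof -
  interpret qp p av using assms by (unfold_locales)
  show ?thesis using tilde_imp_alg alg_in_tilde by blast
qed

end
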